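(* Let $A$ and $B$ be two $m\times m$ coloring matrices. If $A$ and $B$ are tree coloring equivalent, then the sum of all entries of $A^TA+A^2$ equals the sum of all entries of $B^TB+B^2$.
   Context: A plane tree is an unlabeled rooted tree in which the children of every vertex are linearly ordered. A coloring matrix is an $m\times m$ matrix $A=(a_{ij})$ with entries in $\{0,1\}$. An $A$-coloring of a plane tree assigns to each vertex a color in $\{1,\dots,m\}$ such that whenever a vertex of color $j$ is a child of a vertex of color $i$, $a_{ij}=1$. Let $t_A(n)$ be the number of pairs (plane tree with $n$ vertices, $A$-coloring of it). Two $m\times m$ coloring matrices $A,B$ are tree coloring equivalent if $t_A(n)=t_B(n)$ for all $n\ge1$. *)

theory Defs
  imports Main
begin

text \<open>Plane trees: rooted trees with linearly ordered children (rose trees).\<close>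
datatype ptree = PNode "ptree list"

datatype ltree = LNode nat "ltree list"

fun shape :: "ltree \<Rightarrow> ptree" where
  "shape (LNode c ts) = PNode (map shape ts)"

fun psize :: "ptree \<Rightarrow> nat" where
  "psize (PNode ts) = Suc (sum_list (map psize ts))"

fun lroot :: "ltree \<Rightarrow> nat" where
  "lroot (LNode c ts) = c"

fun is_coloring :: "nat \<Rightarrow> (nat \<Rightarrow> nat \<Rightarrow> nat) \<Rightarrow> ltree \<Rightarrow> bool" where
  "is_coloring m A (LNode c ts) =
     (c \<in> {1..m} \<and> (\<forall>t\<in>set ts. A c (lroot t) = 1 \<and> is_coloring m A t))"

definition coloring_matrix :: "nat \<Rightarrow> (nat \<Rightarrow> nat \<Rightarrow> nat) \<Rightarrow> bool" where
  "coloring_matrix m A \<longleftrightarrow> (\<forall>i\<in>{1..m}. \<forall>j\<in>{1..m}. A i j \<in> {0,1})"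

text \<open>t_A(n): number of pairs (plane tree T with n vertices, A-colouring of T).
  A pair is represented by the pair (T, labelled tree of shape T).\<close>
definition tcount :: "nat \<Rightarrow> (nat \<Rightarrow> nat \<Rightarrow> nat) \<Rightarrow> nat \<Rightarrow> nat" where
  "tcount m A n = card {(T, L). psize T = n \<and> shape L = T \<and> is_coloring m A L}"

definition tree_coloring_equivalent :: "nat \<Rightarrow> (nat \<Rightarrow> nat \<Rightarrow> nat) \<Rightarrow> (nat \<Rightarrow> nat \<Rightarrow> nat) \<Rightarrow> bool" where
  "tree_coloring_equivalent m A B \<longleftrightarrow> (\<forall>n\<ge>1. tcount m A n = tcount m B n)"

end

theory Submission
  imports Defs
begin

lemma psize_pos: "psize T \<ge> 1"
  by (cases T) auto

lemma psize1: "psize (shape t) = 1 \<longleftrightarrow> (\<exists>b. t = LNode b [])"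
proof (cases t)
  case (LNode b ts)
  have "sum_list (map psize (map shape ts)) = 0 \<longleftrightarrow> ts = []"
    using psize_pos by (cases ts) (auto simp: le_Suc_eq Suc_le_eq)
  then show ?thesis using LNode by auto
qed

lemma sum_list_pos_len: "sum_list (map psize xs) \<ge> length xs"
  proof (induction xs)
  case (Cons a xs)
  have "psize a \<ge> 1" by (rule psize_pos)
  then show ?case using Cons by simp
qed simp

lemma psize2: "psize (shape t) = 2 \<longleftrightarrow> (\<exists>b c. t = LNode b [LNode c []])"
proof (cases t)
  case (LNode b ts)
  have "sum_list (map psize (map shape ts)) = 1 \<longleftrightarrow> (\<exists>c. ts = [LNode c []])"
  proof
    assume h: "sum_list (map psize (map shape ts)) = 1"
    then have "length ts \<le> 1" using sum_list_pos_len[of "map shape ts"] by simp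
    moreover have "ts \<noteq> []" using h by auto
    ultimately obtain u where "ts = [u]" by (cases ts) auto
    then show "\<exists>c. ts = [LNode c []]" using h psize1 by auto
  next
    assume "\<exists>c. ts = [LNode c []]" then show "sum_list (map psize (map shape ts)) = 1" by auto
  qed
  then show ?thesis using LNode by auto
qed

lemma psize3: "psize (shape L) = 3 \<longleftrightarrow>
   (\<exists>i j k. L = LNode i [LNode k [LNode j []]] \<or> L = LNode k [LNode i [], LNode j []])"
proof (cases L)
  case (LNode a ts)
  have "sum_list (map psize (map shape ts)) = 2 \<longleftrightarrow>
     (\<exists>k j. ts = [LNode k [LNode j []]]) \<or> (\<exists>i j. ts = [LNode i [], LNode j []])"
  proof
    assume h: "sum_list (map psize (map shape ts)) = 2"
    then have "length ts \<le> 2" using sum_list_pos_len[of "map shape ts"] by simp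
    moreover have "ts \<noteq> []" using h by auto
    ultimately consider u where "ts = [u]" | u v where "ts = [u, v]"
      by (cases ts; cases "tl ts") auto
    then show "(\<exists>k j. ts = [LNode k [LNode j []]]) \<or> (\<exists>i j. ts = [LNode i [], LNode j []])"
    proof cases
      case 1 then show ?thesis using h psize2 by auto
    next
      case 2
      then have "psize (shape u) = 1" "psize (shape v) = 1"
        using h psize_pos[of "shape u"] psize_pos[of "shape v"] by auto
      then show ?thesis using 2 psize1 by auto
    qed
  next
    assume "(\<exists>k j. ts = [LNode k [LNode j []]]) \<or> (\<exists>i j. ts = [LNode i [], LNode j []])"
    then show "sum_list (map psize (map shape ts)) = 2" by auto
  qed
  then show ?thesis using LNode by (auto simp: numeral_eq_Suc)
qed

lemma card_filter_sum:
  assumes "finite X" shows "card {x\<in>X. P x} = (\<Sum>x\<in>X. if P x then 1 else 0)"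
  using assms by (simp only: card_eq_sum sum.inter_filter)

lemma Esplit: "(\<Sum>i=1..m::nat. \<Sum>j=1..m. \<Sum>k=1..m. (A k i * A k j + A i k * A k j ::nat)) = (\<Sum>i=1..m. \<Sum>j=1..m. \<Sum>k=1..m. A i k * A k j) + (\<Sum>i=1..m. \<Sum>j=1..m. \<Sum>k=1..m. A k i * A k j)"
  unfolding sum.distrib by (rule add.commute)

lemma tcount3:
  assumes cm: "coloring_matrix m A"
  shows "tcount m A 3 = (\<Sum>i=1..m. \<Sum>j=1..m. \<Sum>k=1..m. A k i * A k j + A i k * A k j)"
proof -
  define C where "C = {1..m} \<times> {1..m} \<times> {1..m}"
  define S1 where "S1 = {x\<in>C. case x of (i,j,k) \<Rightarrow> A i k = 1 \<and> A k j = 1}"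
  define S2 where "S2 = {x\<in>C. case x of (i,j,k) \<Rightarrow> A k i = 1 \<and> A k j = 1}"
  define f1 where "f1 = (\<lambda>(i,j,k). LNode i [LNode k [LNode j []]])"
  define f2 where "f2 = (\<lambda>(i,j,k). LNode k [LNode i [], LNode j []])"
  have ind: "(if A a b = 1 \<and> A c d = 1 then 1 else 0) = A a b * A c d"
    if "a \<in> {1..m}" "b \<in> {1..m}" "c \<in> {1..m}" "d \<in> {1..m}" for a b c d
  proof -
    have "A a b \<in> {0,1}" "A c d \<in> {0,1}" using cm that unfolding coloring_matrix_def by blast+
    then show ?thesis by auto
  qed
  have fin: "finite C" unfolding C_def by simp
  have "{(T, L). psize T = 3 \<and> shape L = T \<and> is_coloring m A L} = (\<lambda>L. (shape L, L)) ` (f1 ` S1 \<union> f2 ` S2)"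
  proof (rule set_eqI, rule iffI)
    fix x assume "x \<in> {(T, L). psize T = 3 \<and> shape L = T \<and> is_coloring m A L}"
    then obtain L where x: "x = (shape L, L)" "psize (shape L) = 3" "is_coloring m A L" by auto
    then obtain i j k where "L = LNode i [LNode k [LNode j []]] \<or> L = LNode k [LNode i [], LNode j []]"
      using psize3 by blast
    then have "L \<in> f1 ` S1 \<union> f2 ` S2"
    proof
      assume L: "L = LNode i [LNode k [LNode j []]]"
      then have "(i,j,k) \<in> S1" using x by (auto simp: S1_def C_def)
      then show ?thesis unfolding L f1_def by force
    next
      assume L: "L = LNode k [LNode i [], LNode j []]"
      then have "(i,j,k) \<in> S2" using x by (auto simp: S2_def C_def)
      then show ?thesis unfolding L f2_def by force
    qed
    then show "x \<in> (\<lambda>L. (shape L, L)) ` (f1 ` S1 \<union> f2 ` S2)" using x by auto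
  next
    fix x assume "x \<in> (\<lambda>L. (shape L, L)) ` (f1 ` S1 \<union> f2 ` S2)"
    then obtain L where x: "x = (shape L, L)" and L: "L \<in> f1 ` S1 \<union> f2 ` S2" by blast
    have "psize (shape L) = 3 \<and> is_coloring m A L"
    proof (cases "L \<in> f1 ` S1")
      case True
      then obtain y where y: "y \<in> S1" "L = f1 y" by blast
      obtain i j k where yy: "y = (i,j,k)" by (cases y) blast
      have Lf: "L = LNode i [LNode k [LNode j []]]" using y yy unfolding f1_def by simp
      have h: "i \<in> {1..m}" "j \<in> {1..m}" "k \<in> {1..m}" "A i k = 1" "A k j = 1"
        using y(1) yy unfolding S1_def C_def by auto
      show ?thesis unfolding Lf using h by (simp add: numeral_3_eq_3)
    next
      case False
      then have "L \<in> f2 ` S2" using L by blast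
      then obtain y where y: "y \<in> S2" "L = f2 y" by blast
      obtain i j k where yy: "y = (i,j,k)" by (cases y) blast
      have Lf: "L = LNode k [LNode i [], LNode j []]" using y yy unfolding f2_def by simp
      have h: "i \<in> {1..m}" "j \<in> {1..m}" "k \<in> {1..m}" "A k i = 1" "A k j = 1"
        using y(1) yy unfolding S2_def C_def by auto
      show ?thesis unfolding Lf using h by (simp add: numeral_3_eq_3)
    qed
    then show "x \<in> {(T, L). psize T = 3 \<and> shape L = T \<and> is_coloring m A L}"
      using x by simp
  qed
  then have "tcount m A 3 = card ((\<lambda>L. (shape L, L)) ` (f1 ` S1 \<union> f2 ` S2))"
    unfolding tcount_def by (rule arg_cong)
  also have "\<dots> = card (f1 ` S1 \<union> f2 ` S2)"
    by (rule card_image) (simp add: inj_on_def)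
  also have "\<dots> = card (f1 ` S1) + card (f2 ` S2)"
  proof (rule card_Un_disjoint)
    have "S1 \<subseteq> C" "S2 \<subseteq> C" unfolding S1_def S2_def by auto
    then have "finite S1" "finite S2" using fin finite_subset by blast+
    then show "finite (f1 ` S1)" "finite (f2 ` S2)" by simp_all
    have "f1 y \<noteq> f2 z" for y z
      by (cases y; cases z) (simp add: f1_def f2_def)
    then show "f1 ` S1 \<inter> f2 ` S2 = {}" by blast
  qed
  also have "\<dots> = card S1 + card S2"
  proof -
    have "inj_on f1 S1" "inj_on f2 S2" by (auto simp: inj_on_def f1_def f2_def)
    then show ?thesis by (simp add: card_image)
  qed
  also have "card S1 = (\<Sum>x\<in>C. case x of (i,j,k) \<Rightarrow> A i k * A k j)"
    unfolding S1_def card_filter_sum[OF fin]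
  proof (rule sum.cong)
    fix x assume "x \<in> C"
    then obtain i j k where x: "x = (i,j,k)" "i \<in> {1..m}" "j \<in> {1..m}" "k \<in> {1..m}"
      unfolding C_def by auto
    show "(if case x of (i,j,k) \<Rightarrow> A i k = 1 \<and> A k j = 1 then 1 else 0) = (case x of (i,j,k) \<Rightarrow> A i k * A k j)"
      using ind[of i k k j] x by simp
  qed simp
  also have "card S2 = (\<Sum>x\<in>C. case x of (i,j,k) \<Rightarrow> A k i * A k j)"
    unfolding S2_def card_filter_sum[OF fin]
  proof (rule sum.cong)
    fix x assume "x \<in> C"
    then obtain i j k where x: "x = (i,j,k)" "i \<in> {1..m}" "j \<in> {1..m}" "k \<in> {1..m}"
      unfolding C_def by auto
    show "(if case x of (i,j,k) \<Rightarrow> A k i = 1 \<and> A k j = 1 then 1 else 0) = (case x of (i,j,k) \<Rightarrow> A k i * A k j)"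
      using ind[of k i k j] x by simp
  qed simp
  finally have T: "tcount m A 3 = (\<Sum>x\<in>C. case x of (i,j,k) \<Rightarrow> A i k * A k j) + (\<Sum>x\<in>C. case x of (i,j,k) \<Rightarrow> A k i * A k j)" .
  have P: "(\<Sum>x\<in>C. case x of (i,j,k) \<Rightarrow> g i j k) = (\<Sum>i=1..m. \<Sum>j=1..m. \<Sum>k=1..m. g i j k)" for g :: "nat \<Rightarrow> nat \<Rightarrow> nat \<Rightarrow> nat"
    unfolding C_def by (simp add: sum.cartesian_product)
  have E: "(\<Sum>i=1..m. \<Sum>j=1..m. \<Sum>k=1..m. A k i * A k j + A i k * A k j) = (\<Sum>i=1..m. \<Sum>j=1..m. \<Sum>k=1..m. A i k * A k j) + (\<Sum>i=1..m. \<Sum>j=1..m. \<Sum>k=1..m. A k i * A k j)"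
    by (rule Esplit)
  show ?thesis
    unfolding E T P[of "\<lambda>i j k. A i k * A k j"] P[of "\<lambda>i j k. A k i * A k j"] by (rule refl)
qed

theorem theorem11:
  fixes m :: nat and A B :: "nat \<Rightarrow> nat \<Rightarrow> nat"
  assumes "coloring_matrix m A" and "coloring_matrix m B"
    and "tree_coloring_equivalent m A B"
  shows "(\<Sum>i=1..m. \<Sum>j=1..m. \<Sum>k=1..m. A k i * A k j + A i k * A k j) =
         (\<Sum>i=1..m. \<Sum>j=1..m. \<Sum>k=1..m. B k i * B k j + B i k * B k j)"
  using assms tcount3[of m A] tcount3[of m B] unfolding tree_coloring_equivalent_def by auto

end
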